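(* Assume the setting below and that $\mathcal{S}$ is pseudo-symmetric. Let $(x_0,y_0)\in L$ be the point with $\varphi(x_0,y_0)=g(\mathcal{S})+a$ and $(x_1,y_1)\in L$ the point with $\varphi(x_1,y_1)=g(\mathcal{S})/2+a$. Then (a) $2\varphi(x_1,y_1)=\varphi(x_0,y_0)+a$; and (b) if $(x',y'),(x'',y'')\in L$ satisfy $2\varphi(x_1,y_1)=\varphi(x',y')+\varphi(x'',y'')$, then $(x',y')=(x'',y'')=(x_1,y_1)$.
   Context: Setting (AA-semigroups). Let $a,d,k,c$ be positive integers with $\gcd(a,a+d,\ldots,a+kd,c)=1$ and $\gcd(a,d)=1$, and let $\mathcal{S}=\langle a,a+d,\ldots,a+kd,c\rangle$ be the numerical semigroup of non-negative integer combinations of these generators; $g(\mathcal{S})$ is its Frobenius number (largest integer not in $\mathcal{S}$). $\mathcal{S}$ is pseudo-symmetric if $g(\mathcal{S})$ is even and $\mathcal{S}\cup(g(\mathcal{S})-\mathcal{S})=\mathbb{Z}\setminus\{g(\mathcal{S})/2\}$. Put $s_{-1}=a$ and let $s_0$ be the unique integer with $ds_0\equiv c\pmod a$, $0\le s_0<a$. If $s_0=0$ set $m=-1$. Otherwise define $q_{i+1},s_{i+1}$ for $i=0,1,2,\ldots$ by $s_{i-1}=q_{i+1}s_i-s_{i+1}$ with $0\le s_{i+1}<s_i$, and let $m$ be the index with $s_m>0=s_{m+1}$ (so $s_m=\gcd(a,c)$). Define $P_{-1}=0$, $P_0=1$, $P_{i+1}=q_{i+1}P_i-P_{i-1}$ for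 $i=0,\ldots,m$, and $R_i=\frac1a\big((a+kd)s_i-kcP_i\big)$ for $-1\le i\le m+1$; these are integers with $-c/s_m=R_{m+1}<R_m<\cdots<R_0<R_{-1}=a+kd$. Let $v$ be the unique integer with $R_{v+1}\le0<R_v$. Let $L=A\cup B$, where $A=\{(x,y)\in\mathbb{Z}^2:0\le x\le s_v-1,\ 0\le y\le P_{v+1}-P_v-1\}$ and $B=\{(x,y)\in\mathbb{Z}^2:0\le x\le s_v-s_{v+1}-1,\ P_{v+1}-P_v\le y\le P_{v+1}-1\}$. Define $\varphi:\mathbb{Z}^2\to\mathbb{Z}$, $\varphi(x,y)=\lceil x/k\rceil a+xd+yc$. It is known (Rødseth) that $|L|=a$ and $\varphi$ maps $L$ bijectively onto $\mathrm{Ap}(\mathcal{S};a)=\{s\in\mathcal{S}:s-a\notin\mathcal{S}\}$; consequently $g(\mathcal{S})+a=\max\varphi(L)$ is attained at $(s_v-s_{v+1}-1,P_{v+1}-1)$ or at $(s_v-1,P_{v+1}-P_v-1)$. *)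

theory Defs
  imports Complex_Main "HOL-Number_Theory.Cong"
begin

definition AA_gens :: "int \<Rightarrow> int \<Rightarrow> int \<Rightarrow> int \<Rightarrow> int set" where
  "AA_gens a d k c = {a + j * d | j. 0 \<le> j \<and> j \<le> k} \<union> {c}"

inductive_set num_semigroup :: "int set \<Rightarrow> int set" for G :: "int set" where
  zero: "0 \<in> num_semigroup G"
| add: "x \<in> num_semigroup G \<Longrightarrow> g \<in> G \<Longrightarrow> x + g \<in> num_semigroup G"

definition AA_semigroup :: "int \<Rightarrow> int \<Rightarrow> int \<Rightarrow> int \<Rightarrow> int set" where
  "AA_semigroup a d k c = num_semigroup (AA_gens a d k c)"

definition frobenius :: "int set \<Rightarrow> int" where
  "frobenius S = (GREATEST n. n \<notin> S)"

definition pseudo_symmetric :: "int set \<Rightarrow> bool" where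
  "pseudo_symmetric S \<longleftrightarrow> even (frobenius S) \<and>
     S \<union> {frobenius S - s | s. s \<in> S} = UNIV - {frobenius S div 2}"

definition s_zero :: "int \<Rightarrow> int \<Rightarrow> int \<Rightarrow> int" where
  "s_zero a d c = (THE s. 0 \<le> s \<and> s < a \<and> [d * s = c] (mod a))"

text \<open>State n = (s_{n-1}, s_n, P_{n-1}, P_n).  Recursion
  s_{i-1} = q_{i+1} s_i - s_{i+1}, 0 <= s_{i+1} < s_i (so q_{i+1} = ceil(s_{i-1}/s_i)),
  P_{i+1} = q_{i+1} P_i - P_{i-1}.  Once s_n = 0 the state is frozen (junk values
  beyond the meaningful range).\<close>
fun AA_state :: "int \<Rightarrow> int \<Rightarrow> nat \<Rightarrow> int \<times> int \<times> int \<times> int" where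
  "AA_state a s0 0 = (a, s0, 0, 1)"
| "AA_state a s0 (Suc n) =
     (case AA_state a s0 n of (u, w, p, r) \<Rightarrow>
        if w = 0 then (0, 0, r, r)
        else (let snew = (- u) mod w; q = (u + snew) div w
              in (w, snew, r, q * r - p)))"

definition s_seq :: "int \<Rightarrow> int \<Rightarrow> int \<Rightarrow> int \<Rightarrow> int" where
  "s_seq a d c i = fst (AA_state a (s_zero a d c) (nat (i + 1)))"

definition P_seq :: "int \<Rightarrow> int \<Rightarrow> int \<Rightarrow> int \<Rightarrow> int" where
  "P_seq a d c i = fst (snd (snd (AA_state a (s_zero a d c) (nat (i + 1)))))"

definition m_idx :: "int \<Rightarrow> int \<Rightarrow> int \<Rightarrow> int" where
  "m_idx a d c = (THE m. -1 \<le> m \<and> s_seq a d c m > 0 \<and> s_seq a d c (m + 1) = 0)"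

definition R_seq :: "int \<Rightarrow> int \<Rightarrow> int \<Rightarrow> int \<Rightarrow> int \<Rightarrow> int" where
  "R_seq a d k c i = ((a + k * d) * s_seq a d c i - k * c * P_seq a d c i) div a"

definition v_idx :: "int \<Rightarrow> int \<Rightarrow> int \<Rightarrow> int \<Rightarrow> int" where
  "v_idx a d k c = (THE v. -1 \<le> v \<and> v \<le> m_idx a d c \<and>
       R_seq a d k c (v + 1) \<le> 0 \<and> 0 < R_seq a d k c v)"

definition L_set :: "int \<Rightarrow> int \<Rightarrow> int \<Rightarrow> int \<Rightarrow> (int \<times> int) set" where
  "L_set a d k c =
     (let v = v_idx a d k c; sv = s_seq a d c v; sv1 = s_seq a d c (v + 1);
          Pv = P_seq a d c v; Pv1 = P_seq a d c (v + 1)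
      in {(x, y). 0 \<le> x \<and> x \<le> sv - 1 \<and> 0 \<le> y \<and> y \<le> Pv1 - Pv - 1}
       \<union> {(x, y). 0 \<le> x \<and> x \<le> sv - sv1 - 1 \<and> Pv1 - Pv \<le> y \<and> y \<le> Pv1 - 1})"

definition phi :: "int \<Rightarrow> int \<Rightarrow> int \<Rightarrow> int \<Rightarrow> int \<times> int \<Rightarrow> int" where
  "phi a d k c p = (case p of (x, y) \<Rightarrow>
      \<lceil>real_of_int x / real_of_int k\<rceil> * a + x * d + y * c)"

end

theory Submission
  imports Defs
begin


lemma ceil_div_le:
  fixes k X t s :: int
  assumes "0 < k" "s \<le> k * t"
  shows "\<lceil>real_of_int (X + s) / real_of_int k\<rceil> \<le> \<lceil>real_of_int X / real_of_int k\<rceil> + t"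
proof -
  have "real_of_int (X + s) / real_of_int k \<le> real_of_int X / real_of_int k + real_of_int t"
  proof -
    have "real_of_int s \<le> real_of_int k * real_of_int t" using assms(2) by (metis of_int_le_iff of_int_mult)
    then have "real_of_int s / real_of_int k \<le> real_of_int t" using assms(1)
      by (simp add: divide_le_eq mult.commute)
    then show ?thesis by (simp add: add_divide_distrib)
  qed
  then have "\<lceil>real_of_int (X + s) / real_of_int k\<rceil> \<le> \<lceil>real_of_int X / real_of_int k + real_of_int t\<rceil>"
    by (rule ceiling_mono)
  then show ?thesis by simp
qed

lemma nat_dec: "0 \<le> (m::int) \<Longrightarrow> m < n \<Longrightarrow> nat m < nat n" by simp


lemma sg_char:
  assumes "n \<in> num_semigroup (AA_gens a d k c)" "0 < (k::int)"
  shows "\<exists>X Y t. 0 \<le> X \<and> 0 \<le> Y \<and> 0 \<le> t \<and> n = phi a d k c (X, Y) + t * a"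
  using assms(1)
proof (induction rule: num_semigroup.induct)
  case zero
  show ?case by (intro exI[of _ 0]) (simp add: phi_def)
next
  case (add x g)
  then obtain X Y t where h: "0 \<le> X" "0 \<le> Y" "0 \<le> t" "x = phi a d k c (X, Y) + t * a" by blast
  from add.hyps(2) consider j where "0 \<le> j" "j \<le> k" "g = a + j * d" | "g = c"
    unfolding AA_gens_def by blast
  then show ?case
  proof cases
    case 1
    have ce: "\<lceil>real_of_int (X + j) / real_of_int k\<rceil> \<le> \<lceil>real_of_int X / real_of_int k\<rceil> + 1"
      using ceil_div_le[OF assms(2), of j 1 X] 1 by simp
    define t' where "t' = t + \<lceil>real_of_int X / real_of_int k\<rceil> + 1 - \<lceil>real_of_int (X + j) / real_of_int k\<rceil>"
    have "x + g = phi a d k c (X + j, Y) + t' * a"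
      using h(4) 1(3) by (simp add: phi_def t'_def algebra_simps)
    moreover have "0 \<le> t'" using ce h(3) by (simp add: t'_def)
    ultimately show ?thesis using h 1 by (intro exI[of _ "X + j"] exI[of _ Y] exI[of _ t']) auto
  next
    case 2
    have "x + g = phi a d k c (X, Y + 1) + t * a"
      using h(4) 2 by (simp add: phi_def algebra_simps)
    then show ?thesis using h by (intro exI[of _ X] exI[of _ "Y + 1"] exI[of _ t]) auto
  qed
qed

locale geo =
  fixes a d k c S0 S1 Q0 Q1 :: int
  assumes pos: "0 < a" "0 < d" "0 < k" "0 < c"
    and sS: "0 \<le> S1" "S1 < S0" and sQ: "0 \<le> Q0" "Q0 < Q1"
    and det: "S0 * Q1 - S1 * Q0 = a"
    and c0: "a dvd d * S0 - c * Q0" and c1: "a dvd d * S1 - c * Q1"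
    and r0: "(a + k * d) * S0 - k * c * Q0 > 0" and r1: "(a + k * d) * S1 - k * c * Q1 \<le> 0"
    and gad: "coprime a d"
begin

definition Lg :: "(int \<times> int) set" where
  "Lg = {(x, y). 0 \<le> x \<and> x \<le> S0 - 1 \<and> 0 \<le> y \<and> y \<le> Q1 - Q0 - 1}
       \<union> {(x, y). 0 \<le> x \<and> x \<le> S0 - S1 - 1 \<and> Q1 - Q0 \<le> y \<and> y \<le> Q1 - 1}"

abbreviation ph where "ph x y \<equiv> phi a d k c (x, y)"

lemma move1: "ph (X + S1) (Y - Q1) \<le> ph X Y"
proof -
  obtain t where t: "c * Q1 - d * S1 = a * t" using c1
    by (metis dvd_def minus_diff_eq dvd_minus_iff)
  have "k * (a * t) = k * (c * Q1 - d * S1)" using t by simp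
  also have "\<dots> = k * c * Q1 - k * d * S1" by (simp add: algebra_simps)
  also have "\<dots> \<ge> a * S1" using r1 by (simp add: algebra_simps)
  finally have "a * S1 \<le> a * (k * t)" by (simp add: algebra_simps)
  then have kt: "S1 \<le> k * t" using pos(1) by simp
  have ce: "\<lceil>real_of_int (X + S1) / real_of_int k\<rceil> \<le> \<lceil>real_of_int X / real_of_int k\<rceil> + t"
    using ceil_div_le[OF pos(3) kt] .
  have "ph (X + S1) (Y - Q1) = \<lceil>real_of_int (X + S1) / real_of_int k\<rceil> * a + (X + S1) * d + (Y - Q1) * c"
    by (simp add: phi_def)
  also have "\<dots> \<le> (\<lceil>real_of_int X / real_of_int k\<rceil> + t) * a + (X + S1) * d + (Y - Q1) * c"
    using ce pos(1) by (simp add: mult_right_mono)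
  also have "\<dots> = ph X Y" using t by (simp add: phi_def algebra_simps)
  finally show ?thesis .
qed

lemma move2: "ph (X - S0) (Y + Q0) \<le> ph X Y"
proof -
  obtain t where t: "d * S0 - c * Q0 = a * t" using c0 by (metis dvd_def)
  have "k * (a * t) = k * (d * S0 - c * Q0)" using t by simp
  also have "\<dots> = k * d * S0 - k * c * Q0" by (simp add: algebra_simps)
  also have "\<dots> > - a * S0" using r0 by (simp add: algebra_simps)
  finally have "a * (- S0) < a * (k * t)" by (simp add: algebra_simps)
  then have "- S0 < k * t" using pos(1) mult_less_cancel_left_pos by blast
  then have kt: "- S0 \<le> k * t" by simp
  have ce: "\<lceil>real_of_int (X + - S0) / real_of_int k\<rceil> \<le> \<lceil>real_of_int X / real_of_int k\<rceil> + t"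
    using ceil_div_le[OF pos(3) kt] .
  have "ph (X - S0) (Y + Q0) = \<lceil>real_of_int (X + - S0) / real_of_int k\<rceil> * a + (X - S0) * d + (Y + Q0) * c"
    by (simp add: phi_def)
  also have "\<dots> \<le> (\<lceil>real_of_int X / real_of_int k\<rceil> + t) * a + (X - S0) * d + (Y + Q0) * c"
    using ce pos(1) by (simp add: mult_right_mono)
  also have "\<dots> = ph X Y" using t by (simp add: phi_def algebra_simps)
  finally show ?thesis .
qed


lemma Lg_bounds: "(x, y) \<in> Lg \<Longrightarrow> 0 \<le> x \<and> x < S0 \<and> 0 \<le> y \<and> y < Q1"
  unfolding Lg_def using sS sQ by auto

lemma core:
  assumes p: "(x, y) \<in> Lg" and q: "(x', y') \<in> Lg"
    and ex: "x - x' = al * S0 - b * S1" and ey: "y - y' = b * Q1 - al * Q0"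
    and al: "1 \<le> al" and b: "1 \<le> b"
  shows False
proof -
  have bp: "0 \<le> x" "x < S0" "0 \<le> y" "y < Q1" using Lg_bounds[OF p] by auto
  have bq: "0 \<le> x'" "x' < S0" "0 \<le> y'" "y' < Q1" using Lg_bounds[OF q] by auto
  consider "al \<ge> b + 1" | "al \<le> b - 1" | "al = b" by linarith
  then show False
  proof cases
    case 1
    have "al * S0 \<ge> (b + 1) * S0" using 1 sS by (intro mult_right_mono) auto
    moreover have "b * (S0 - S1) \<ge> 0" using b sS by simp
    ultimately have "x - x' \<ge> S0" using ex by (simp add: algebra_simps)
    then show False using bp bq by linarith
  next
    case 2
    have "al * Q0 \<le> (b - 1) * Q0" using 2 sQ by (intro mult_right_mono) auto
    moreover have "(b - 1) * (Q1 - Q0) \<ge> 0" using b sQ by simp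
    ultimately have "y - y' \<ge> Q1" using ey by (simp add: algebra_simps)
    then show False using bp bq by linarith
  next
    case 3
    have "b * (S0 - S1) \<ge> 1 * (S0 - S1)" using b sS by (intro mult_right_mono) auto
    then have "x - x' \<ge> S0 - S1" using ex 3 by (simp add: algebra_simps)
    then have "x \<ge> S0 - S1" using bq by linarith
    then have yb: "y \<le> Q1 - Q0 - 1" using p unfolding Lg_def by auto
    have "b * (Q1 - Q0) \<ge> 1 * (Q1 - Q0)" using b sQ by (intro mult_right_mono) auto
    then have "y - y' \<ge> Q1 - Q0" using ey 3 by (simp add: algebra_simps)
    then show False using yb bq by linarith
  qed
qed

lemma Fprop:
  assumes p: "(x, y) \<in> Lg" and q: "(x', y') \<in> Lg"
    and e: "a dvd (d * x + c * y) - (d * x' + c * y')"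
  shows "x = x' \<and> y = y'"
proof -
  define X where "X = x - x'"
  define Y where "Y = y - y'"
  have e': "a dvd d * X + c * Y" using e by (simp add: X_def Y_def algebra_simps)
  have "a dvd d * (X * Q1 + Y * S1)"
  proof -
    have "d * (X * Q1 + Y * S1) = (d * X + c * Y) * Q1 + Y * (d * S1 - c * Q1)"
      by (simp add: algebra_simps)
    then show ?thesis using e' c1 by simp
  qed
  then have "a dvd X * Q1 + Y * S1" using gad by (simp add: coprime_dvd_mult_right_iff)
  then obtain al where al: "X * Q1 + Y * S1 = a * al" by (auto simp: dvd_def)
  have "a dvd d * (X * Q0 + Y * S0)"
  proof -
    have "d * (X * Q0 + Y * S0) = (d * X + c * Y) * Q0 + Y * (d * S0 - c * Q0)"
      by (simp add: algebra_simps)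
    then show ?thesis using e' c0 by simp
  qed
  then have "a dvd X * Q0 + Y * S0" using gad by (simp add: coprime_dvd_mult_right_iff)
  then obtain be where be: "X * Q0 + Y * S0 = a * be" by (auto simp: dvd_def)
  have "a * X = a * (al * S0 - be * S1)"
  proof -
    have "a * (al * S0 - be * S1) = (a * al) * S0 - (a * be) * S1" by (simp add: algebra_simps)
    also have "\<dots> = X * (S0 * Q1 - S1 * Q0)" unfolding al[symmetric] be[symmetric] by (simp add: algebra_simps)
    finally show ?thesis using det by auto
  qed
  then have EX: "X = al * S0 - be * S1" using pos(1) by simp
  have "a * Y = a * (be * Q1 - al * Q0)"
  proof -
    have "a * (be * Q1 - al * Q0) = (a * be) * Q1 - (a * al) * Q0" by (simp add: algebra_simps)
    also have "\<dots> = Y * (S0 * Q1 - S1 * Q0)" unfolding al[symmetric] be[symmetric] by (simp add: algebra_simps)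
    finally show ?thesis using det by auto
  qed
  then have EY: "Y = be * Q1 - al * Q0" using pos(1) by simp
  have bp: "0 \<le> x" "x < S0" "0 \<le> y" "y < Q1" using Lg_bounds[OF p] by auto
  have bq: "0 \<le> x'" "x' < S0" "0 \<le> y'" "y' < Q1" using Lg_bounds[OF q] by auto
  have "al = 0 \<and> be = 0"
  proof (rule ccontr)
    assume ne: "\<not> (al = 0 \<and> be = 0)"
    consider "be = 0" | "al = 0" | "al > 0" "be < 0" | "al < 0" "be > 0" | "al > 0" "be > 0" | "al < 0" "be < 0"
      by linarith
    then show False
    proof cases
      case 1
      then have "al \<noteq> 0" using ne by auto
      then have "\<bar>al\<bar> * S0 \<ge> 1 * S0" using sS by (intro mult_right_mono) auto
      moreover have "\<bar>X\<bar> = \<bar>al\<bar> * S0" using EX 1 sS by (simp add: abs_mult)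
      ultimately show False using bp bq X_def by linarith
    next
      case 2
      then have "be \<noteq> 0" using ne by auto
      then have "\<bar>be\<bar> * Q1 \<ge> 1 * Q1" using sQ by (intro mult_right_mono) auto
      moreover have "\<bar>Y\<bar> = \<bar>be\<bar> * Q1" using EY 2 sQ by (simp add: abs_mult)
      ultimately show False using bp bq Y_def by linarith
    next
      case 3
      have "al * Q0 \<ge> 0" using 3 sQ by simp
      moreover have "(- be) * Q1 \<ge> 1 * Q1" using 3 sQ by (intro mult_right_mono) auto
      then have "be * Q1 \<le> - Q1" by simp
      ultimately show False using EY bp bq Y_def by linarith
    next
      case 4
      have "(- al) * Q0 \<ge> 0" using 4 sQ by (intro mult_nonneg_nonneg) auto
      then have "al * Q0 \<le> 0" by simp
      moreover have "be * Q1 \<ge> 1 * Q1" using 4 sQ by (intro mult_right_mono) auto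
      then have "be * Q1 \<ge> Q1" by simp
      ultimately show False using EY bp bq Y_def by linarith
    next
      case 5
      show False using core[OF p q, of al be] EX EY 5 X_def Y_def by (simp add: algebra_simps)
    next
      case 6
      show False using core[OF q p, of "- al" "- be"] EX EY 6 X_def Y_def by (simp add: algebra_simps)
    qed
  qed
  then show ?thesis using EX EY X_def Y_def by simp
qed


lemma descent:
  assumes "0 \<le> X" "0 \<le> Y"
  shows "\<exists>x y. (x, y) \<in> Lg \<and> a dvd (d * x + c * y) - (d * X + c * Y) \<and> ph x y \<le> ph X Y"
  using assms
proof (induction "nat ((Q0 + Q1) * X + (S0 + S1) * Y)" arbitrary: X Y rule: less_induct)
  case less
  have f1: "(Q0 + Q1) * (X + S1) + (S0 + S1) * (Y - Q1) = (Q0 + Q1) * X + (S0 + S1) * Y - a"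
    using det by (simp add: algebra_simps)
  have f2: "(Q0 + Q1) * (X - S0) + (S0 + S1) * (Y + Q0) = (Q0 + Q1) * X + (S0 + S1) * Y - a"
    using det by (simp add: algebra_simps)
  have f3: "(Q0 + Q1) * (X + S1 - S0) + (S0 + S1) * (Y - Q1 + Q0) = (Q0 + Q1) * X + (S0 + S1) * Y - 2 * a"
    using det by (simp add: algebra_simps)
  have fpos: "(Q0 + Q1) * X + (S0 + S1) * Y \<ge> 0" using less.prems sS sQ by simp
  show ?case
  proof (cases "(X, Y) \<in> Lg")
    case True
    then show ?thesis by (intro exI[of _ X] exI[of _ Y]) simp
  next
    case nL: False
    consider "Y \<ge> Q1" | "Y < Q1" "X \<ge> S0" | "Y < Q1" "X < S0" by linarith
    then show ?thesis
    proof cases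
      case 1
      have "nat ((Q0 + Q1) * (X + S1) + (S0 + S1) * (Y - Q1)) < nat ((Q0 + Q1) * X + (S0 + S1) * Y)"
        using f1 pos(1) by (intro nat_dec) (use 1 sS sQ less.prems in \<open>intro add_nonneg_nonneg mult_nonneg_nonneg; auto\<close>, linarith)
      then obtain x y where xy: "(x, y) \<in> Lg" "a dvd (d * x + c * y) - (d * (X + S1) + c * (Y - Q1))"
        "ph x y \<le> ph (X + S1) (Y - Q1)"
        using less.hyps[of "X + S1" "Y - Q1"] less.prems 1 sS by auto
      have "a dvd (d * x + c * y) - (d * X + c * Y)"
      proof -
        have "(d * x + c * y) - (d * X + c * Y) = ((d * x + c * y) - (d * (X + S1) + c * (Y - Q1))) + (d * S1 - c * Q1)"
          by (simp add: algebra_simps)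
        then show ?thesis using dvd_add[OF xy(2) c1] by (simp only:)
      qed
      then show ?thesis using xy move1[of X Y] by force
    next
      case 2
      have "nat ((Q0 + Q1) * (X - S0) + (S0 + S1) * (Y + Q0)) < nat ((Q0 + Q1) * X + (S0 + S1) * Y)"
        using f2 pos(1) by (intro nat_dec) (use 2 sS sQ less.prems in \<open>intro add_nonneg_nonneg mult_nonneg_nonneg; auto\<close>, linarith)
      then obtain x y where xy: "(x, y) \<in> Lg" "a dvd (d * x + c * y) - (d * (X - S0) + c * (Y + Q0))"
        "ph x y \<le> ph (X - S0) (Y + Q0)"
        using less.hyps[of "X - S0" "Y + Q0"] less.prems 2 sQ by auto
      have "a dvd (d * x + c * y) - (d * X + c * Y)"
      proof -
        have "(d * x + c * y) - (d * X + c * Y) = ((d * x + c * y) - (d * (X - S0) + c * (Y + Q0))) - (d * S0 - c * Q0)"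
          by (simp add: algebra_simps)
        then show ?thesis using dvd_diff[OF xy(2) c0] by (simp only:)
      qed
      then show ?thesis using xy move2[of X Y] by force
    next
      case 3
      have yy: "Y \<ge> Q1 - Q0" using nL 3 less.prems unfolding Lg_def by auto
      have xx: "X \<ge> S0 - S1" using nL 3 yy less.prems unfolding Lg_def by auto
      have "nat ((Q0 + Q1) * (X + S1 - S0) + (S0 + S1) * (Y - Q1 + Q0)) < nat ((Q0 + Q1) * X + (S0 + S1) * Y)"
      proof (rule nat_dec)
        have "0 \<le> X + S1 - S0" "0 \<le> Y - Q1 + Q0" using xx yy by auto
        then have "0 \<le> (Q0 + Q1) * (X + S1 - S0)" "0 \<le> (S0 + S1) * (Y - Q1 + Q0)"
          using sS sQ by (auto intro!: mult_nonneg_nonneg)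
        then show "0 \<le> (Q0 + Q1) * (X + S1 - S0) + (S0 + S1) * (Y - Q1 + Q0)" by linarith
        show "(Q0 + Q1) * (X + S1 - S0) + (S0 + S1) * (Y - Q1 + Q0) < (Q0 + Q1) * X + (S0 + S1) * Y"
          using f3 pos(1) by linarith
      qed
      then obtain x y where xy: "(x, y) \<in> Lg" "a dvd (d * x + c * y) - (d * (X + S1 - S0) + c * (Y - Q1 + Q0))"
        "ph x y \<le> ph (X + S1 - S0) (Y - Q1 + Q0)"
        using less.hyps[of "X + S1 - S0" "Y - Q1 + Q0"] xx yy by auto
      have "a dvd (d * x + c * y) - (d * X + c * Y)"
      proof -
        have "(d * x + c * y) - (d * X + c * Y) = ((d * x + c * y) - (d * (X + S1 - S0) + c * (Y - Q1 + Q0))) + (d * S1 - c * Q1) - (d * S0 - c * Q0)"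
          by (simp add: algebra_simps)
        then show ?thesis using dvd_diff[OF dvd_add[OF xy(2) c1] c0] by (simp only:)
      qed
      moreover have "ph (X + S1 - S0) (Y - Q1 + Q0) \<le> ph X Y"
        using move2[of "X + S1" "Y - Q1"] move1[of X Y] by simp
      ultimately show ?thesis using xy by force
    qed
  qed
qed


lemma phi_mod: "a dvd ph x y - (d * x + c * y)"
  by (simp add: phi_def)

lemma Mprop:
  assumes p: "(x, y) \<in> Lg"
  shows "ph x y - a \<notin> num_semigroup (AA_gens a d k c)"
proof
  assume "ph x y - a \<in> num_semigroup (AA_gens a d k c)"
  then obtain X Y t where h: "0 \<le> X" "0 \<le> Y" "0 \<le> t" "ph x y - a = ph X Y + t * a"
    using sg_char pos(3) by blast
  obtain x' y' where q: "(x', y') \<in> Lg" "a dvd (d * x' + c * y') - (d * X + c * Y)" "ph x' y' \<le> ph X Y"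
    using descent[OF h(1,2)] by blast
  have "a dvd (d * X + c * Y) - (d * x + c * y)"
  proof -
    have "(d * X + c * Y) - (d * x + c * y) = (ph x y - (d * x + c * y)) - (ph X Y - (d * X + c * Y)) - (t + 1) * a"
      using h(4) by (simp add: algebra_simps)
    moreover have "a dvd (t + 1) * a" by simp
    ultimately show ?thesis using dvd_diff[OF dvd_diff[OF phi_mod[of x y] phi_mod[of X Y]]]
      by (simp only:)
  qed
  from dvd_add[OF q(2) this] have "a dvd (d * x' + c * y') - (d * x + c * y)"
    by (simp add: algebra_simps)
  then have "x' = x \<and> y' = y" using Fprop[OF q(1) p] by simp
  then show False using q(3) h pos(1) by (smt (verit) mult_nonneg_nonneg)
qed

lemma inj_L:
  assumes "(x, y) \<in> Lg" "(x', y') \<in> Lg" "ph x y = ph x' y'"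
  shows "x = x' \<and> y = y'"
proof -
  have "a dvd (d * x + c * y) - (d * x' + c * y')"
  proof -
    have "(d * x + c * y) - (d * x' + c * y') = (ph x' y' - (d * x' + c * y')) - (ph x y - (d * x + c * y))"
      using assms(3) by simp
    then show ?thesis using dvd_diff[OF phi_mod[of x' y'] phi_mod[of x y]] by (simp only:)
  qed
  then show ?thesis using Fprop assms(1,2) by blast
qed

end


lemma nat_crossing: "P 0 \<Longrightarrow> \<not> P N \<Longrightarrow> \<exists>j<N. P j \<and> \<not> P (Suc j)"
proof (induction N)
  case 0 then show ?case by simp
next
  case (Suc N)
  then show ?case by (cases "P N") (auto intro: less_SucI)
qed

lemma state_inv:
  fixes a s0 d c :: int
  assumes a: "0 < a" and s0: "0 \<le> s0" "s0 < a" and dv: "a dvd d * s0 - c"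
  shows "case AA_state a s0 n of (u, w, p, r) \<Rightarrow> 0 \<le> u \<and> 0 \<le> w \<and> (u = 0 \<longrightarrow> w = 0) \<and>
     (0 < u \<longrightarrow> w < u \<and> u * r - w * p = a \<and> 0 \<le> p \<and> p < r \<and> a dvd d * u - c * p \<and> a dvd d * w - c * r)"
proof (induction n)
  case 0
  then show ?case using assms by simp
next
  case (Suc n)
  obtain u w p r where st: "AA_state a s0 n = (u, w, p, r)" by (cases "AA_state a s0 n") auto
  with Suc.IH have I: "0 \<le> u" "0 \<le> w" "u = 0 \<longrightarrow> w = 0"
    "0 < u \<longrightarrow> w < u \<and> u * r - w * p = a \<and> 0 \<le> p \<and> p < r \<and> a dvd d * u - c * p \<and> a dvd d * w - c * r"
    by auto
  show ?case
  proof (cases "w = 0")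
    case True
    then show ?thesis using st by simp
  next
    case False
    then have wp: "0 < w" using I by simp
    then have up: "0 < u" using I by auto
    have I4: "w < u" "u * r - w * p = a" "0 \<le> p" "p < r" "a dvd d * u - c * p" "a dvd d * w - c * r"
      using I(4) up by auto
    define sn where "sn = (- u) mod w"
    define q where "q = (u + sn) div w"
    have sn: "0 \<le> sn" "sn < w" using wp by (auto simp: sn_def)
    have "(- u) mod w = - u - w * ((- u) div w)" using minus_mult_div_eq_mod[of "- u" w] by simp
    then have "u + sn = w * (- ((- u) div w))" unfolding sn_def by simp
    then have qw: "q * w = u + sn" unfolding q_def using wp by simp
    have sneq: "sn = q * w - u" using qw by simp
    have "1 * w < q * w" using qw I4(1) sn by simp
    then have "1 < q" using wp by (simp only: mult_less_cancel_right)
    then have q2: "q \<ge> 2" by simp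
    have rpos: "0 < r" using I4 by simp
    have "(q - 1) * r \<ge> 1 * r" using q2 rpos by (intro mult_right_mono) auto
    then have "q * r - r \<ge> r" by (simp add: algebra_simps)
    then have "r < q * r - p" using I4 by linarith
    moreover have "w * (q * r - p) - sn * r = a"
    proof -
      have "w * (q * r - p) - sn * r = (q * w) * r - w * p - sn * r" by (simp add: algebra_simps)
      also have "\<dots> = u * r - w * p" unfolding qw by (simp add: algebra_simps)
      finally show ?thesis using I4 by simp
    qed
    moreover have "a dvd d * sn - c * (q * r - p)"
    proof -
      have "d * sn - c * (q * r - p) = q * (d * w - c * r) - (d * u - c * p)"
        unfolding sneq by (simp add: algebra_simps)
      then show ?thesis using I4 by simp
    qed
    ultimately show ?thesis using st False wp sn I4 by (simp add: Let_def sn_def[symmetric] q_def[symmetric])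
  qed
qed


locale seqL =
  fixes a d k c :: int
  assumes pos: "0 < a" "0 < d" "0 < k" "0 < c"
    and gad: "gcd a d = 1"
begin

lemma s_zero_ok: "0 \<le> s_zero a d c \<and> s_zero a d c < a \<and> a dvd d * s_zero a d c - c"
proof -
  have cop: "coprime a d" using gad by (simp add: coprime_iff_gcd_eq_1)
  have cop': "coprime d a" using cop by (simp add: coprime_commute)
  obtain e where e: "[d * e = 1] (mod a)" using cong_solve_coprime_int[OF cop'] by blast
  have e': "a dvd d * e - 1" using e by (simp add: cong_iff_dvd_diff)
  define s where "s = (e * c) mod a"
  have s_eq: "s = e * c - a * ((e * c) div a)" unfolding s_def using minus_mult_div_eq_mod[of "e * c" a] by simp
  have "d * s - c = c * (d * e - 1) - a * (d * ((e * c) div a))"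
    unfolding s_eq by (simp add: algebra_simps)
  then have sd: "a dvd d * s - c" using e' by simp
  have P: "0 \<le> s" "s < a" using pos(1) by (auto simp: s_def)
  have U: "t = s" if "0 \<le> t" "t < a" "a dvd d * t - c" for t
  proof -
    have "a dvd (d * t - c) - (d * s - c)" using that(3) sd by (rule dvd_diff)
    then have "a dvd d * (t - s)" by (simp add: algebra_simps)
    then have "a dvd t - s" using cop by (simp add: coprime_dvd_mult_right_iff)
    then have "[t = s] (mod a)" by (simp add: cong_iff_dvd_diff)
    then show ?thesis using cong_less_imp_eq_int that P by blast
  qed
  have "s_zero a d c = s" unfolding s_zero_def
  proof (rule the_equality)
    show "0 \<le> s \<and> s < a \<and> [d * s = c] (mod a)" using P sd by (simp add: cong_iff_dvd_diff)
  next
    fix t assume "0 \<le> t \<and> t < a \<and> [d * t = c] (mod a)"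
    then show "t = s" using U by (simp add: cong_iff_dvd_diff)
  qed
  then show ?thesis using P sd by simp
qed

abbreviation s0 where "s0 \<equiv> s_zero a d c"
abbreviation ss where "ss \<equiv> s_seq a d c"
abbreviation PP where "PP \<equiv> P_seq a d c"

lemma st_eq:
  assumes "-1 \<le> i"
  shows "AA_state a s0 (nat (i + 1)) = (ss i, ss (i + 1), PP i, PP (i + 1))"
proof -
  obtain u w p r where st: "AA_state a s0 (nat (i + 1)) = (u, w, p, r)" by (cases "AA_state a s0 (nat (i + 1))") auto
  have n2: "nat (i + 1 + 1) = Suc (nat (i + 1))" using assms by simp
  have "ss i = u" "PP i = p" unfolding s_seq_def P_seq_def using st by auto
  moreover have "ss (i + 1) = w" "PP (i + 1) = r" unfolding s_seq_def P_seq_def n2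
    using st by (auto simp: Let_def)
  ultimately show ?thesis using st by simp
qed

lemma inv_i:
  assumes "-1 \<le> i"
  shows "0 \<le> ss i \<and> 0 \<le> ss (i + 1) \<and> (ss i = 0 \<longrightarrow> ss (i + 1) = 0) \<and>
    (0 < ss i \<longrightarrow> ss (i + 1) < ss i \<and> ss i * PP (i + 1) - ss (i + 1) * PP i = a \<and> 0 \<le> PP i \<and> PP i < PP (i + 1)
      \<and> a dvd d * ss i - c * PP i \<and> a dvd d * ss (i + 1) - c * PP (i + 1))"
proof -
  have z: "0 \<le> s0" "s0 < a" "a dvd d * s0 - c" using s_zero_ok by auto
  have H: "case AA_state a s0 (nat (i + 1)) of (u, w, p, r) \<Rightarrow> 0 \<le> u \<and> 0 \<le> w \<and> (u = 0 \<longrightarrow> w = 0) \<and>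
     (0 < u \<longrightarrow> w < u \<and> u * r - w * p = a \<and> 0 \<le> p \<and> p < r \<and> a dvd d * u - c * p \<and> a dvd d * w - c * r)"
    by (rule state_inv[OF pos(1) z])
  then show ?thesis unfolding st_eq[OF assms] by (simp only: prod.case) blast
qed


lemma ss_m1: "ss (-1) = a" "PP (-1) = 0"
  unfolding s_seq_def P_seq_def by simp_all

lemma ss_nonneg: "-1 \<le> i \<Longrightarrow> 0 \<le> ss i"
  using inv_i by blast

lemma zero_prop: "-1 \<le> i \<Longrightarrow> ss i = 0 \<Longrightarrow> ss (i + int n) = 0"
proof (induction n)
  case 0 then show ?case by simp
next
  case (Suc n)
  then have "ss (i + int n) = 0" by simp
  moreover have "-1 \<le> i + int n" using Suc.prems by simp
  ultimately have "ss (i + int n + 1) = 0" using inv_i by blast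
  moreover have "i + int (Suc n) = i + int n + 1" by simp
  ultimately show ?case by (simp only:)
qed

lemma exists_zero: "\<exists>i\<ge>-1. ss i = 0"
proof (rule ccontr)
  assume "\<not> ?thesis"
  then have nz: "\<And>i. -1 \<le> i \<Longrightarrow> 0 < ss i" using ss_nonneg by (metis less_le)
  have "ss (-1 + int n) \<le> a - int n" for n
  proof (induction n)
    case 0 then show ?case using ss_m1 by simp
  next
    case (Suc n)
    have "-1 \<le> -1 + int n" by simp
    then have "ss (-1 + int n + 1) < ss (-1 + int n)" using inv_i nz by blast
    then show ?case using Suc.IH by (simp add: add.assoc)
  qed
  from this[of "nat a + 1"] have "ss (-1 + int (nat a + 1)) < 0" using pos(1) by simp
  moreover have "0 \<le> ss (-1 + int (nat a + 1))" by (rule ss_nonneg) simp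
  ultimately show False by simp
qed

lemma m_ok: "-1 \<le> m_idx a d c \<and> 0 < ss (m_idx a d c) \<and> ss (m_idx a d c + 1) = 0"
proof -
  obtain i where i: "-1 \<le> i" "ss i = 0" using exists_zero by blast
  define P where "P n = (0 < ss (int n - 1))" for n :: nat
  have "P 0" using ss_m1 pos(1) by (simp add: P_def)
  moreover have "\<not> P (nat (i + 1))" using i by (simp add: P_def)
  ultimately obtain j where j: "P j" "\<not> P (Suc j)" using nat_crossing by blast
  define m where "m = int j - 1"
  have m1: "-1 \<le> m" unfolding m_def by simp
  have m2: "0 < ss m" using j(1) unfolding P_def m_def .
  have "\<not> 0 < ss (m + 1)" using j(2) unfolding P_def m_def by simp
  moreover have "0 \<le> ss (m + 1)" using m1 by (intro ss_nonneg) simp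
  ultimately have m3: "ss (m + 1) = 0" by linarith
  have U: "m' = m" if t: "-1 \<le> m'" "0 < ss m'" "ss (m' + 1) = 0" for m'
  proof (rule ccontr)
    assume "m' \<noteq> m"
    then consider "m' < m" | "m < m'" by linarith
    then show False
    proof cases
      case 1
      have "ss (m' + 1 + int (nat (m - m' - 1))) = 0" using zero_prop[of "m' + 1" "nat (m - m' - 1)"] t by simp
      moreover have "m' + 1 + int (nat (m - m' - 1)) = m" using 1 by simp
      ultimately have "ss m = 0" by (simp only:)
      then show False using m2 by simp
    next
      case 2
      have "ss (m + 1 + int (nat (m' - m - 1))) = 0" using zero_prop[of "m + 1" "nat (m' - m - 1)"] m1 m3 by simp
      moreover have "m + 1 + int (nat (m' - m - 1)) = m'" using 2 by simp
      ultimately have "ss m' = 0" by (simp only:)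
      then show False using t by simp
    qed
  qed
  have "m_idx a d c = m" unfolding m_idx_def
  proof (rule the_equality)
    show "-1 \<le> m \<and> 0 < ss m \<and> ss (m + 1) = 0" using m1 m2 m3 by simp
  next
    fix m' assume "-1 \<le> m' \<and> 0 < ss m' \<and> ss (m' + 1) = 0"
    then show "m' = m" using U by blast
  qed
  then show ?thesis using m1 m2 m3 by simp
qed

abbreviation mm where "mm \<equiv> m_idx a d c"

lemma pos_below: "-1 \<le> i \<Longrightarrow> i \<le> mm \<Longrightarrow> 0 < ss i"
proof (rule ccontr)
  assume h: "-1 \<le> i" "i \<le> mm" "\<not> 0 < ss i"
  then have "ss i = 0" using ss_nonneg[OF h(1)] by linarith
  then have "ss (i + int (nat (mm - i))) = 0" using zero_prop h by blast
  moreover have "i + int (nat (mm - i)) = mm" using h by simp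
  ultimately have "ss mm = 0" by (simp only:)
  then show False using m_ok by simp
qed

abbreviation RR where "RR \<equiv> R_seq a d k c"

lemma R_step: "-1 \<le> i \<Longrightarrow> i \<le> mm \<Longrightarrow> RR (i + 1) \<le> RR i"
proof -
  assume h: "-1 \<le> i" "i \<le> mm"
  have I: "ss (i + 1) < ss i" "PP i < PP (i + 1)" using inv_i[OF h(1)] pos_below[OF h] by auto
  have "(a + k * d) * ss (i + 1) \<le> (a + k * d) * ss i" using I pos by (intro mult_left_mono) auto
  moreover have "k * c * PP i \<le> k * c * PP (i + 1)" using I pos by (intro mult_left_mono) auto
  ultimately have "(a + k * d) * ss (i + 1) - k * c * PP (i + 1) \<le> (a + k * d) * ss i - k * c * PP i" by linarith
  then show ?thesis unfolding R_seq_def using pos(1) by (intro zdiv_mono1) auto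
qed

lemma R_chain: "-1 \<le> j \<Longrightarrow> j + int n \<le> mm + 1 \<Longrightarrow> RR (j + int n) \<le> RR j"
proof (induction n)
  case 0 then show ?case by simp
next
  case (Suc n)
  have "RR (j + int n + 1) \<le> RR (j + int n)" using Suc.prems by (intro R_step) auto
  moreover have "j + int (Suc n) = j + int n + 1" by simp
  moreover have "RR (j + int n) \<le> RR j" using Suc by simp
  ultimately show ?case by (simp only:)
qed

lemma v_ok: "-1 \<le> v_idx a d k c \<and> v_idx a d k c \<le> mm \<and> RR (v_idx a d k c + 1) \<le> 0 \<and> 0 < RR (v_idx a d k c)"
proof -
  have "0 < k * d" using pos by simp
  then have kd: "0 < a + k * d" using pos(1) by linarith
  have "(a + k * d) * a - k * c * 0 = a * (a + k * d)" by simp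
  then have Rm1: "0 < RR (-1)" unfolding R_seq_def ss_m1 using pos(1) kd by simp
  have mo: "-1 \<le> mm" "0 < ss mm" "ss (mm + 1) = 0" using m_ok by auto
  have "0 \<le> PP (mm + 1)" using inv_i[of mm] mo by auto
  then have "- (k * c * PP (mm + 1)) \<le> 0" using pos by simp
  then have Rm: "RR (mm + 1) \<le> 0" unfolding R_seq_def using mo(3) pos(1)
    by (simp add: div_nonpos_pos_le0)
  define P where "P n = (0 < RR (int n - 1))" for n :: nat
  have "P 0" using Rm1 by (simp add: P_def)
  moreover have "int (nat (mm + 2)) - 1 = mm + 1" using mo(1) by simp
  then have "\<not> P (nat (mm + 2))" using Rm unfolding P_def by (simp only:)
  ultimately obtain j where j: "j < nat (mm + 2)" "P j" "\<not> P (Suc j)" using nat_crossing by blast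
  define v where "v = int j - 1"
  have v1: "-1 \<le> v" "v \<le> mm" using j(1) unfolding v_def by auto
  have v2: "0 < RR v" using j(2) unfolding P_def v_def .
  have v3: "RR (v + 1) \<le> 0" using j(3) unfolding P_def v_def by simp
  have U: "v' = v" if t: "-1 \<le> v'" "v' \<le> mm" "RR (v' + 1) \<le> 0" "0 < RR v'" for v'
  proof (rule ccontr)
    assume "v' \<noteq> v"
    then consider "v' < v" | "v < v'" by linarith
    then show False
    proof cases
      case 1
      have "RR (v' + 1 + int (nat (v - v' - 1))) \<le> RR (v' + 1)" using t v1 1 by (intro R_chain) auto
      moreover have "v' + 1 + int (nat (v - v' - 1)) = v" using 1 by simp
      ultimately have "RR v \<le> RR (v' + 1)" by (simp only:)
      then show False using t v2 by simp
    next
      case 2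
      have "RR (v + 1 + int (nat (v' - v - 1))) \<le> RR (v + 1)" using t v1 2 by (intro R_chain) auto
      moreover have "v + 1 + int (nat (v' - v - 1)) = v'" using 2 by simp
      ultimately have "RR v' \<le> RR (v + 1)" by (simp only:)
      then show False using t v3 by simp
    qed
  qed
  have "v_idx a d k c = v" unfolding v_idx_def
  proof (rule the_equality)
    show "-1 \<le> v \<and> v \<le> mm \<and> RR (v + 1) \<le> 0 \<and> 0 < RR v" using v1 v2 v3 by simp
  next
    fix v' assume "-1 \<le> v' \<and> v' \<le> mm \<and> RR (v' + 1) \<le> 0 \<and> 0 < RR v'"
    then show "v' = v" using U by blast
  qed
  then show ?thesis using v1 v2 v3 by simp
qed


abbreviation vv where "vv \<equiv> v_idx a d k c"

lemma geo_inst: "geo a d k c (ss vv) (ss (vv + 1)) (PP vv) (PP (vv + 1))"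
proof -
  have v: "-1 \<le> vv" "vv \<le> mm" "RR (vv + 1) \<le> 0" "0 < RR vv" using v_ok by auto
  have sp: "0 < ss vv" using pos_below v(1,2) by blast
  have I: "0 \<le> ss (vv + 1)" "ss (vv + 1) < ss vv" "ss vv * PP (vv + 1) - ss (vv + 1) * PP vv = a"
    "0 \<le> PP vv" "PP vv < PP (vv + 1)" "a dvd d * ss vv - c * PP vv" "a dvd d * ss (vv + 1) - c * PP (vv + 1)"
    using inv_i[OF v(1)] sp by auto
  have r0: "(a + k * d) * ss vv - k * c * PP vv > 0"
  proof (rule ccontr)
    assume "\<not> ?thesis"
    then have "((a + k * d) * ss vv - k * c * PP vv) div a \<le> 0" using pos(1) by (simp add: div_nonpos_pos_le0)
    then show False using v(4) unfolding R_seq_def by simp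
  qed
  have r1: "(a + k * d) * ss (vv + 1) - k * c * PP (vv + 1) \<le> 0"
  proof -
    define N where "N = (a + k * d) * ss (vv + 1) - k * c * PP (vv + 1)"
    have "N = a * ss (vv + 1) + k * (d * ss (vv + 1) - c * PP (vv + 1))" unfolding N_def by (simp add: algebra_simps)
    then have "a dvd N" using I(7) by simp
    then have "N = a * (N div a)" by simp
    moreover have "N div a \<le> 0" using v(3) unfolding R_seq_def N_def by simp
    ultimately have "N \<le> 0" using pos(1) mult_nonneg_nonpos[of a "N div a"] by linarith
    then show ?thesis unfolding N_def .
  qed
  have cop: "coprime a d" using gad by (simp add: coprime_iff_gcd_eq_1)
  show ?thesis
    by unfold_locales (use pos I r0 r1 cop in auto)
qed

lemma L_eq: "L_set a d k c = geo.Lg (ss vv) (ss (vv + 1)) (PP vv) (PP (vv + 1))"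
  unfolding L_set_def geo.Lg_def[OF geo_inst] Let_def by simp

end


theorem mainTheorem6:
  fixes a d k c :: int
  assumes pos: "0 < a" "0 < d" "0 < k" "0 < c"
    and gcd_gens: "Gcd (AA_gens a d k c) = 1"
    and gcd_ad: "gcd a d = 1"
    and psym: "pseudo_symmetric (AA_semigroup a d k c)"
    and p0: "(x0, y0) \<in> L_set a d k c"
    and phi0: "phi a d k c (x0, y0) = frobenius (AA_semigroup a d k c) + a"
    and p1: "(x1, y1) \<in> L_set a d k c"
    and phi1: "phi a d k c (x1, y1) = frobenius (AA_semigroup a d k c) div 2 + a"
  shows "2 * phi a d k c (x1, y1) = phi a d k c (x0, y0) + a
     \<and> (\<forall>p' p''. p' \<in> L_set a d k c \<longrightarrow> p'' \<in> L_set a d k c \<longrightarrow>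
          2 * phi a d k c (x1, y1) = phi a d k c p' + phi a d k c p'' \<longrightarrow>
          p' = (x1, y1) \<and> p'' = (x1, y1))"
proof -
  interpret seqL a d k c using pos gcd_ad by unfold_locales
  interpret G: geo a d k c "ss vv" "ss (vv + 1)" "PP vv" "PP (vv + 1)" by (rule geo_inst)
  define S where "S = AA_semigroup a d k c"
  define g where "g = frobenius S"
  have ev: "even g" and SU: "S \<union> {g - s | s. s \<in> S} = UNIV - {g div 2}"
    using psym unfolding pseudo_symmetric_def S_def g_def by auto
  have g2: "g = 2 * (g div 2)" using ev by simp
  have L: "L_set a d k c = G.Lg" by (rule L_eq)
  have M: "phi a d k c p - a \<notin> S" if "p \<in> L_set a d k c" for p
    using G.Mprop[of "fst p" "snd p"] that unfolding L S_def AA_semigroup_def by simp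
  have key: "p = (x1, y1)" if h: "p \<in> L_set a d k c" "p'' \<in> L_set a d k c"
      "2 * phi a d k c (x1, y1) = phi a d k c p + phi a d k c p''" for p p''
  proof -
    define u where "u = phi a d k c p - a"
    have uS: "u \<notin> S" using M[OF h(1)] unfolding u_def .
    have "u = g div 2"
    proof (rule ccontr)
      assume "u \<noteq> g div 2"
      then have "u \<in> S \<union> {g - s | s. s \<in> S}" using SU by auto
      then obtain s where s: "s \<in> S" "u = g - s" using uS by auto
      have "phi a d k c p'' - a = s" using h(3) phi1 s(2) g2 unfolding u_def g_def S_def by linarith
      then show False using M[OF h(2)] s(1) by simp
    qed
    then have "phi a d k c p = phi a d k c (x1, y1)" using phi1 unfolding u_def g_def S_def by simp
    then show ?thesis using G.inj_L[of "fst p" "snd p" x1 y1] h(1) p1 unfolding L by (cases p) auto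
  qed
  have A: "2 * phi a d k c (x1, y1) = phi a d k c (x0, y0) + a"
    using phi0 phi1 g2 unfolding g_def S_def by linarith
  show ?thesis
  proof (intro conjI A allI impI)
    fix p' p''
    assume h: "p' \<in> L_set a d k c" "p'' \<in> L_set a d k c"
      "2 * phi a d k c (x1, y1) = phi a d k c p' + phi a d k c p''"
    show "p' = (x1, y1)" using key[OF h] .
    show "p'' = (x1, y1)" using key[OF h(2,1)] h(3) by (simp add: add.commute)
  qed
qed

end
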